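(* Let $(\Omega,\mathcal{F},\mathbb{P})$ be a nonatomic probability space, let $1\le q<\infty$, let $u(x)=-|x|^q$ for $x<0$ and $u(x)=0$ for $x\ge0$, let $\alpha<0$, and set $\mathcal{A}_u^\infty=\{X\in L^\infty:\mathbb{E}[u(X)]\ge\alpha\}$. Let $S=(S_0,S_T)$ be a traded asset with $S_T\in L^\infty$ and assume $\rho_{\mathcal{A}_u^\infty,S}$ is finite-valued on $L^\infty$. Then $\mathrm{Index}_{\mathrm{fin}}(\rho_{\mathcal{A}_u^\infty,S})=q$ and the infimum defining the index is attained.
   Context: A traded asset is $S=(S_0,S_T)$ with $S_0>0$, $S_T\ge0$ a.s., $S_T\ne0$. For $\mathcal{B}\subset L^\infty$, $\rho_{\mathcal{B},S}(X)=\inf\{m\in\mathbb{R}:X+\frac{m}{S_0}S_T\in\mathcal{B}\}$. For a convex, law-invariant acceptance set $\mathcal{A}\subset L^\infty$ with $\rho_{\mathcal{A},S}$ finite-valued on $L^\infty$, $\mathrm{Index}_{\mathrm{fin}}(\rho_{\mathcal{A},S})=\inf\{p\in[1,\infty):\text{the closure of }\mathcal{A}\text{ in }L^p\text{ has nonempty interior in }L^p\}$, with $\inf\emptyset=\infty$; the index is attained if this infimum belongs to the set. *)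

theory Defs
  imports "HOL-Probability.Probability"
begin

definition nonatomic :: "'a measure \<Rightarrow> bool" where
  "nonatomic M \<longleftrightarrow> (\<forall>A\<in>sets M. measure M A > 0 \<longrightarrow>
     (\<exists>B\<in>sets M. B \<subseteq> A \<and> 0 < measure M B \<and> measure M B < measure M A))"

definition Linf :: "'a measure \<Rightarrow> ('a \<Rightarrow> real) set" where
  "Linf M = {X. X \<in> borel_measurable M \<and> (\<exists>C. AE \<omega> in M. \<bar>X \<omega>\<bar> \<le> C)}"

definition memLp :: "'a measure \<Rightarrow> real \<Rightarrow> ('a \<Rightarrow> real) \<Rightarrow> bool" where
  "memLp M p X \<longleftrightarrow> X \<in> borel_measurable M \<and> integrable M (\<lambda>\<omega>. \<bar>X \<omega>\<bar> powr p)"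

definition Lp_norm :: "'a measure \<Rightarrow> real \<Rightarrow> ('a \<Rightarrow> real) \<Rightarrow> real" where
  "Lp_norm M p X = (\<integral>\<omega>. \<bar>X \<omega>\<bar> powr p \<partial>M) powr (1 / p)"

definition Lp_closure :: "'a measure \<Rightarrow> real \<Rightarrow> ('a \<Rightarrow> real) set \<Rightarrow> ('a \<Rightarrow> real) set" where
  "Lp_closure M p A = {X. memLp M p X \<and> (\<exists>Xs. (\<forall>n. Xs n \<in> A) \<and>
       (\<lambda>n. Lp_norm M p (\<lambda>\<omega>. Xs n \<omega> - X \<omega>)) \<longlonglongrightarrow> 0)}"

definition Lp_interior_nonempty :: "'a measure \<Rightarrow> real \<Rightarrow> ('a \<Rightarrow> real) set \<Rightarrow> bool" where
  "Lp_interior_nonempty M p B \<longleftrightarrow> (\<exists>X\<in>B. memLp M p X \<and> (\<exists>\<epsilon>>0. \<forall>Y. memLp M p Y \<and>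
       Lp_norm M p (\<lambda>\<omega>. Y \<omega> - X \<omega>) < \<epsilon> \<longrightarrow> Y \<in> B))"

definition index_set :: "'a measure \<Rightarrow> ('a \<Rightarrow> real) set \<Rightarrow> real set" where
  "index_set M A = {p. 1 \<le> p \<and> Lp_interior_nonempty M p (Lp_closure M p A)}"

text \<open>Index_fin, valued in the extended reals so that Inf of the empty set is infinity.\<close>
definition index_fin :: "'a measure \<Rightarrow> ('a \<Rightarrow> real) set \<Rightarrow> ereal" where
  "index_fin M A = Inf (ereal ` index_set M A)"

definition rho_set :: "'a measure \<Rightarrow> ('a \<Rightarrow> real) set \<Rightarrow> real \<Rightarrow> ('a \<Rightarrow> real) \<Rightarrow> ('a \<Rightarrow> real) \<Rightarrow> real set" where
  "rho_set M B S0 ST X = {m. (\<lambda>\<omega>. X \<omega> + m / S0 * ST \<omega>) \<in> B}"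

definition rho :: "'a measure \<Rightarrow> ('a \<Rightarrow> real) set \<Rightarrow> real \<Rightarrow> ('a \<Rightarrow> real) \<Rightarrow> ('a \<Rightarrow> real) \<Rightarrow> real" where
  "rho M B S0 ST X = Inf (rho_set M B S0 ST X)"

text \<open>rho is finite-valued on L-infinity: for every X the defining set is nonempty
  and bounded below (so the infimum is a real number, not +-infinity).\<close>
definition rho_finite :: "'a measure \<Rightarrow> ('a \<Rightarrow> real) set \<Rightarrow> real \<Rightarrow> ('a \<Rightarrow> real) \<Rightarrow> bool" where
  "rho_finite M B S0 ST \<longleftrightarrow> (\<forall>X\<in>Linf M. rho_set M B S0 ST X \<noteq> {} \<and> bdd_below (rho_set M B S0 ST X))"

definition traded_asset :: "'a measure \<Rightarrow> real \<Rightarrow> ('a \<Rightarrow> real) \<Rightarrow> bool" where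
  "traded_asset M S0 ST \<longleftrightarrow> S0 > 0 \<and> ST \<in> borel_measurable M \<and> (AE \<omega> in M. ST \<omega> \<ge> 0)
     \<and> \<not> (AE \<omega> in M. ST \<omega> = 0)"

definition u_q :: "real \<Rightarrow> real \<Rightarrow> real" where
  "u_q q x = (if x < 0 then - (\<bar>x\<bar> powr q) else 0)"

definition A_u :: "'a measure \<Rightarrow> real \<Rightarrow> real \<Rightarrow> ('a \<Rightarrow> real) set" where
  "A_u M q \<alpha> = {X. X \<in> Linf M \<and> (\<integral>\<omega>. u_q q (X \<omega>) \<partial>M) \<ge> \<alpha>}"

end

theory Submission
  imports Defs
begin


lemma u_q_meas[measurable]:
  assumes [measurable]: "X \<in> borel_measurable M"
  shows "(\<lambda>\<omega>. u_q q (X \<omega>)) \<in> borel_measurable M"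
  unfolding u_q_def by measurable

lemma u_q_ge: "u_q q x \<ge> - (\<bar>x\<bar> powr q)"
  unfolding u_q_def by auto

lemma u_q_le0: "u_q q x \<le> 0"
  unfolding u_q_def by auto

lemma abs_diff_powr_le:
  fixes a b p :: real assumes "p > 0"
  shows "\<bar>a - b\<bar> powr p \<le> 2 powr p * (\<bar>a\<bar> powr p + \<bar>b\<bar> powr p)"
proof -
  have "\<bar>a - b\<bar> \<le> 2 * max \<bar>a\<bar> \<bar>b\<bar>" by auto
  hence "\<bar>a - b\<bar> powr p \<le> (2 * max \<bar>a\<bar> \<bar>b\<bar>) powr p"
    using assms by (intro powr_mono2) auto
  also have "\<dots> = 2 powr p * (max \<bar>a\<bar> \<bar>b\<bar>) powr p"
    by (simp add: powr_mult)
  also have "(max \<bar>a\<bar> \<bar>b\<bar>) powr p \<le> \<bar>a\<bar> powr p + \<bar>b\<bar> powr p"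
    by (cases "\<bar>a\<bar> \<le> \<bar>b\<bar>") (auto simp: max_def)
  finally show ?thesis by simp
qed

lemma Linf_A:
  assumes "prob_space M" "X \<in> Linf M" "0 \<le> q"
  shows "integrable M (\<lambda>\<omega>. u_q q (X \<omega>))"
proof -
  interpret prob_space M by fact
  from assms(2) obtain C where [measurable]: "X \<in> borel_measurable M" and C: "AE \<omega> in M. \<bar>X \<omega>\<bar> \<le> C"
    unfolding Linf_def by auto
  show ?thesis
  proof (rule integrable_const_bound[where B="\<bar>C\<bar> powr q"])
    show "AE x in M. norm (u_q q (X x)) \<le> \<bar>C\<bar> powr q"
      using C by eventually_elim (use assms(3) in \<open>auto simp: u_q_def intro!: powr_mono2\<close>)
  qed measurable
qed

lemma part1:
  assumes "prob_space M" "1 \<le> q" "\<alpha> < 0"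
  shows "q \<in> index_set M (A_u M q \<alpha>)"
proof -
  interpret prob_space M by fact
  have q0: "q > 0" using assms by auto
  have zA: "(\<lambda>\<omega>. 0) \<in> A_u M q \<alpha>"
    using assms by (auto simp: A_u_def Linf_def u_q_def)
  have z: "(\<lambda>\<omega>. 0) \<in> Lp_closure M q (A_u M q \<alpha>)"
    unfolding Lp_closure_def memLp_def
    by (intro CollectI conjI exI[of _ "\<lambda>n. \<lambda>\<omega>. 0"]) (use zA q0 in \<open>auto simp: Lp_norm_def\<close>)
  define \<epsilon> where "\<epsilon> = (- \<alpha>) powr (1/q)"
  have e0: "\<epsilon> > 0" using assms unfolding \<epsilon>_def by auto
  have main: "Y \<in> Lp_closure M q (A_u M q \<alpha>)"
    if Y: "memLp M q Y" and nY: "Lp_norm M q (\<lambda>\<omega>. Y \<omega> - 0) < \<epsilon>" for Y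
  proof -
    have [measurable]: "Y \<in> borel_measurable M" and iY: "integrable M (\<lambda>\<omega>. \<bar>Y \<omega>\<bar> powr q)"
      using Y by (auto simp: memLp_def)
    have IY: "(\<integral>\<omega>. \<bar>Y \<omega>\<bar> powr q \<partial>M) < - \<alpha>"
    proof -
      have "(\<integral>\<omega>. \<bar>Y \<omega>\<bar> powr q \<partial>M) powr (1/q) < (- \<alpha>) powr (1/q)"
        using nY by (simp add: Lp_norm_def \<epsilon>_def)
      moreover have "(\<integral>\<omega>. \<bar>Y \<omega>\<bar> powr q \<partial>M) \<ge> 0" by (intro integral_nonneg_AE) auto
      ultimately show ?thesis using q0 assms(3)
        by (smt (verit) divide_nonneg_nonneg powr_mono2)
    qed
    define Xs where "Xs n \<omega> = max (- real n) (min (real n) (Y \<omega>))" for n \<omega>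
    have Xm[measurable]: "Xs n \<in> borel_measurable M" for n unfolding Xs_def by measurable
    have XL: "Xs n \<in> Linf M" for n
      unfolding Linf_def by (auto simp: Xs_def intro!: exI[of _ "real n"])
    have XA: "Xs n \<in> A_u M q \<alpha>" for n
    proof -
      have "(\<integral>\<omega>. u_q q (Xs n \<omega>) \<partial>M) \<ge> (\<integral>\<omega>. - (\<bar>Y \<omega>\<bar> powr q) \<partial>M)"
      proof (intro integral_mono)
        show "integrable M (\<lambda>\<omega>. u_q q (Xs n \<omega>))" using Linf_A[OF assms(1) XL] q0 by auto
        show "integrable M (\<lambda>\<omega>. - (\<bar>Y \<omega>\<bar> powr q))" using iY by auto
        fix \<omega> show "- (\<bar>Y \<omega>\<bar> powr q) \<le> u_q q (Xs n \<omega>)"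
          unfolding u_q_def Xs_def using q0 by (auto intro!: powr_mono2)
      qed
      then show ?thesis using IY XL by (auto simp: A_u_def)
    qed
    have conv: "(\<lambda>n. \<integral>\<omega>. \<bar>Xs n \<omega> - Y \<omega>\<bar> powr q \<partial>M) \<longlonglongrightarrow> (\<integral>\<omega>. 0 \<partial>M)"
    proof (rule integral_dominated_convergence[where w="\<lambda>\<omega>. \<bar>Y \<omega>\<bar> powr q"])
      show "integrable M (\<lambda>\<omega>. \<bar>Y \<omega>\<bar> powr q)" by (rule iY)
      show "AE x in M. (\<lambda>i. \<bar>Xs i x - Y x\<bar> powr q) \<longlonglongrightarrow> 0"
      proof (intro AE_I2)
        fix x
        obtain N :: nat where "\<bar>Y x\<bar> \<le> real N" using real_arch_simple by blast
        hence "\<forall>n\<ge>N. \<bar>Xs n x - Y x\<bar> powr q = 0" by (auto simp: Xs_def)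
        thus "(\<lambda>i. \<bar>Xs i x - Y x\<bar> powr q) \<longlonglongrightarrow> 0"
          by (intro tendsto_eventually) (auto simp: eventually_sequentially)
      qed
      fix i show "AE x in M. norm (\<bar>Xs i x - Y x\<bar> powr q) \<le> \<bar>Y x\<bar> powr q"
        using q0 by (intro AE_I2) (auto simp: Xs_def intro!: powr_mono2)
    qed measurable
    have "(\<lambda>n. Lp_norm M q (\<lambda>\<omega>. Xs n \<omega> - Y \<omega>)) \<longlonglongrightarrow> 0"
      unfolding Lp_norm_def
    proof (rule tendsto_zero_powrI[where b="1/q"])
      show "(\<lambda>n. \<integral>\<omega>. \<bar>Xs n \<omega> - Y \<omega>\<bar> powr q \<partial>M) \<longlonglongrightarrow> 0" using conv by simp
      show "\<forall>\<^sub>F n in sequentially. 0 \<le> (\<integral>\<omega>. \<bar>Xs n \<omega> - Y \<omega>\<bar> powr q \<partial>M)"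
        by (auto intro!: integral_nonneg_AE)
    qed (use q0 in auto)
    then show ?thesis using Y XA unfolding Lp_closure_def by blast
  qed
  show ?thesis unfolding index_set_def Lp_interior_nonempty_def
    using assms(2) z e0 main
    by (intro CollectI conjI bexI[of _ "\<lambda>\<omega>. 0"]) (auto simp: memLp_def q0)
qed




lemma small_subset:
  assumes "prob_space M" "nonatomic M" "A \<in> sets M" "measure M A > 0"
  shows "\<exists>B\<in>sets M. B \<subseteq> A \<and> 0 < measure M B \<and> measure M B \<le> measure M A / 2"
proof -
  interpret prob_space M by fact
  obtain B where B: "B \<in> sets M" "B \<subseteq> A" "0 < measure M B" "measure M B < measure M A"
    using assms unfolding nonatomic_def by blast
  show ?thesis
  proof (cases "measure M B \<le> measure M A / 2")
    case True thus ?thesis using B by blast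
  next
    case False
    have "measure M (A - B) = measure M A - measure M B"
      using B assms(3) by (intro finite_measure_Diff) auto
    thus ?thesis using B False assms(3) by (intro bexI[of _ "A - B"]) auto
  qed
qed

lemma disjoint_seq:
  assumes "prob_space M" "nonatomic M" "F \<in> sets M" "measure M F > 0" "c > 0"
  shows "\<exists>D. disjoint_family D \<and> (\<forall>n. D n \<in> sets M \<and> D n \<subseteq> F \<and> 0 < measure M (D n)
            \<and> measure M (D n) \<le> c * (1/2)^n)"
proof -
  interpret prob_space M by fact
  define nxt where "nxt A = (SOME B. B \<in> sets M \<and> B \<subseteq> A \<and> 0 < measure M B \<and> measure M B \<le> measure M A / 2)" for A
  have nxt: "nxt A \<in> sets M \<and> nxt A \<subseteq> A \<and> 0 < measure M (nxt A) \<and> measure M (nxt A) \<le> measure M A / 2"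
    if "A \<in> sets M" "measure M A > 0" for A
    unfolding nxt_def by (rule someI_ex) (use small_subset[OF assms(1,2) that] in blast)
  define E where "E n = (nxt ^^ n) F" for n
  have E: "E n \<in> sets M \<and> 0 < measure M (E n) \<and> measure M (E n) \<le> (1/2)^n" for n
  proof (induction n)
    case 0 thus ?case using assms by (simp add: E_def)
  next
    case (Suc n)
    have "E (Suc n) = nxt (E n)" by (simp add: E_def)
    thus ?case using nxt[of "E n"] Suc by auto
  qed
  have Esub: "E (Suc n) \<subseteq> E n" for n using nxt[of "E n"] E[of n] by (simp add: E_def)
  have Emono: "E m \<subseteq> E n" if "n \<le> m" for m n
    using that by (induction m) (use Esub le_Suc_eq in blast)+
  have E0: "E 0 = F" by (simp add: E_def)
  obtain N :: nat where N: "(1/2)^N \<le> c"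
    using real_arch_pow_inv[of c "1/2"] assms(5) by (metis less_eq_real_def less_numeral_extra(1) one_less_numeral_iff divide_less_eq_1_pos semiring_norm(76) zero_less_numeral)
  define D where "D n = E (n + N) - E (Suc (n + N))" for n
  have "disjoint_family D"
    unfolding disjoint_family_on_def
  proof (intro ballI impI)
    fix m n :: nat assume "m \<noteq> n"
    show "D m \<inter> D n = {}"
    proof (cases "m < n")
      case True
      then have "E (n + N) \<subseteq> E (Suc (m + N))" by (intro Emono) auto
      thus ?thesis by (auto simp: D_def)
    next
      case False
      with \<open>m \<noteq> n\<close> have "E (m + N) \<subseteq> E (Suc (n + N))" by (intro Emono) auto
      thus ?thesis by (auto simp: D_def)
    qed
  qed
  moreover have "D n \<in> sets M \<and> D n \<subseteq> F \<and> 0 < measure M (D n) \<and> measure M (D n) \<le> c * (1/2)^n" for n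
  proof -
    let ?k = "n + N"
    have s: "E ?k \<in> sets M" "E (Suc ?k) \<in> sets M" using E by auto
    have meq: "measure M (D n) = measure M (E ?k) - measure M (E (Suc ?k))"
      unfolding D_def using s Esub by (intro finite_measure_Diff) auto
    have h: "measure M (E (Suc ?k)) \<le> measure M (E ?k) / 2"
      using nxt[of "E ?k"] E[of ?k] by (simp add: E_def)
    have "measure M (E ?k) \<le> (1/2)^n * (1/2)^N" using E[of ?k] by (simp add: power_add)
    also have "\<dots> \<le> (1/2)^n * c" using N by (intro mult_left_mono) auto
    finally have "measure M (E ?k) \<le> c * (1/2)^n" by (simp add: mult.commute)
    moreover have "measure M (E (Suc ?k)) \<ge> 0" by simp
    moreover have "D n \<subseteq> F" using Emono[of 0 ?k] E0 by (auto simp: D_def)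
    ultimately show ?thesis using meq h E[of ?k] s by (auto simp: D_def) (smt (verit) measure_nonneg[of M "E (Suc (n+N))"])
  qed
  ultimately show ?thesis by blast
qed




lemma Zterm_in:
  fixes f :: "nat \<Rightarrow> 'b::semiring_1"
  assumes "disjoint_family D" "\<omega> \<in> D k"
  shows "(\<lambda>n. f n * indicator (D n) \<omega>) = (\<lambda>n. if n = k then f k else 0)"
proof
  fix n show "f n * indicator (D n) \<omega> = (if n = k then f k else 0)"
  proof (cases "n = k")
    case False
    then have "\<omega> \<notin> D n" using assms unfolding disjoint_family_on_def by blast
    then show ?thesis using False by simp
  qed (use assms in simp)
qed

lemma Zterm_out:
  fixes f :: "nat \<Rightarrow> 'b::semiring_1"
  assumes "\<omega> \<notin> \<Union>(range D)"
  shows "(\<lambda>n. f n * indicator (D n) \<omega>) = (\<lambda>n. 0)"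
  using assms by auto

lemma Zval_in:
  fixes a :: "nat \<Rightarrow> real"
  assumes "disjoint_family D" "\<omega> \<in> D k"
  shows "(\<Sum>n. a n * indicator (D n) \<omega>) = a k"
proof -
  have "(\<lambda>n. if n = k then a k else 0) sums a k"
    using sums_single[of k a] by (simp cong: if_cong)
  then show ?thesis unfolding Zterm_in[OF assms] by (rule sums_unique[symmetric])
qed

lemma Zval_out:
  fixes a :: "nat \<Rightarrow> real"
  assumes "\<omega> \<notin> \<Union>(range D)"
  shows "(\<Sum>n. a n * indicator (D n) \<omega>) = 0"
  unfolding Zterm_out[OF assms] by simp

lemma Z_meas:
  fixes a :: "nat \<Rightarrow> real"
  assumes "disjoint_family D" "\<And>n. D n \<in> sets M"
  shows "(\<lambda>\<omega>. \<Sum>n. a n * indicator (D n) \<omega>) \<in> borel_measurable M"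
proof (rule borel_measurable_LIMSEQ_real[where u="\<lambda>i \<omega>. \<Sum>n<i. a n * indicator (D n) \<omega>"])
  fix \<omega>
  have "summable (\<lambda>n. a n * indicator (D n) \<omega>)"
  proof (cases "\<omega> \<in> \<Union>(range D)")
    case True then obtain k where k: "\<omega> \<in> D k" by auto
    then show ?thesis unfolding Zterm_in[OF assms(1) k] by simp
  next
    case False then show ?thesis unfolding Zterm_out[OF False] by simp
  qed
  then show "(\<lambda>i. \<Sum>n<i. a n * indicator (D n) \<omega>) \<longlonglongrightarrow> (\<Sum>n. a n * indicator (D n) \<omega>)"
    by (rule summable_LIMSEQ)
next
  fix i show "(\<lambda>\<omega>. \<Sum>n<i. a n * indicator (D n) \<omega>) \<in> borel_measurable M"
    using assms(2) by measurable
qed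

lemma Z_nn:
  fixes a :: "nat \<Rightarrow> real"
  assumes "disjoint_family D" "\<And>n. D n \<in> sets M" "h 0 = 0"
  shows "(\<integral>\<^sup>+\<omega>. ennreal (h (\<Sum>n. a n * indicator (D n) \<omega>)) \<partial>M)
     = (\<Sum>n. ennreal (h (a n)) * emeasure M (D n))"
proof -
  have "(\<integral>\<^sup>+\<omega>. ennreal (h (\<Sum>n. a n * indicator (D n) \<omega>)) \<partial>M)
     = (\<integral>\<^sup>+\<omega>. (\<Sum>n. ennreal (h (a n)) * indicator (D n) \<omega>) \<partial>M)"
  proof (rule nn_integral_cong)
    fix \<omega>
    show "ennreal (h (\<Sum>n. a n * indicator (D n) \<omega>)) = (\<Sum>n. ennreal (h (a n)) * indicator (D n) \<omega>)"
    proof (cases "\<omega> \<in> \<Union>(range D)")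
      case True then obtain k where k: "\<omega> \<in> D k" by auto
      have "(\<Sum>n. ennreal (h (a n)) * indicator (D n) \<omega>) = ennreal (h (a k))"
        unfolding Zterm_in[OF assms(1) k]
        by (rule sums_unique[symmetric]) (use sums_single[of k "\<lambda>n. ennreal (h (a n))"] in \<open>simp cong: if_cong\<close>)
      then show ?thesis using Zval_in[OF assms(1) k, of a] by simp
    next
      case False then show ?thesis unfolding Zval_out[OF False] Zterm_out[OF False] using assms(3) by simp
    qed
  qed
  also have "\<dots> = (\<Sum>n. \<integral>\<^sup>+\<omega>. ennreal (h (a n)) * indicator (D n) \<omega> \<partial>M)"
    by (rule nn_integral_suminf) (use assms(2) in measurable)
  also have "\<dots> = (\<Sum>n. ennreal (h (a n)) * emeasure M (D n))"
    using assms(2) by (simp add: nn_integral_cmult_indicator)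
  finally show ?thesis .
qed

lemma const_suminf_top:
  fixes c :: real assumes "c > 0"
  shows "(\<Sum>n::nat. ennreal c) = top"
proof (rule ccontr)
  assume "(\<Sum>n::nat. ennreal c) \<noteq> top"
  then obtain s where s: "0 \<le> s" "(\<Sum>n::nat. ennreal c) = ennreal s"
    by (cases "(\<Sum>n::nat. ennreal c)") auto
  obtain N :: nat where N: "s / c < real N" using reals_Archimedean2 by blast
  have "(\<Sum>n<N. ennreal c) \<le> (\<Sum>n::nat. ennreal c)" by (intro sum_le_suminf) (auto intro: summableI)
  hence "ennreal (real N * c) \<le> ennreal s" using s assms by (simp add: ennreal_of_nat_eq_real_of_nat ennreal_mult)
  hence "real N * c \<le> s" using s by simp
  with N assms show False by (simp add: field_simps)
qed




lemma Z_exists: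
  assumes "prob_space M" "nonatomic M" "F \<in> sets M" "measure M F > 0"
    and "0 < p" "p < q" "\<eta> > 0"
  shows "\<exists>Z. Z \<in> borel_measurable M \<and> (\<forall>\<omega>. 0 \<le> Z \<omega>) \<and> (\<forall>\<omega>. Z \<omega> \<noteq> 0 \<longrightarrow> \<omega> \<in> F \<and> L \<le> Z \<omega>)
     \<and> integrable M (\<lambda>\<omega>. Z \<omega> powr p) \<and> (\<integral>\<omega>. Z \<omega> powr p \<partial>M) < \<eta>
     \<and> (\<integral>\<^sup>+\<omega>. ennreal ((Z \<omega> / 2) powr q) \<partial>M) = top"
proof -
  interpret prob_space M by fact
  define r where "r = 1 - p / q"
  have q0: "q > 0" using assms by auto
  have r0: "0 < r" using assms by (simp add: r_def field_simps)
  define \<beta> where "\<beta> = (1/2::real) powr r"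
  have b0: "0 < \<beta>" and b1: "\<beta> < 1" unfolding \<beta>_def
    using powr_less_mono'[of "1/2::real" 0 r] r0 by auto
  define \<theta> where "\<theta> = \<eta> * (1 - \<beta>) / 2"
  have th0: "\<theta> > 0" using assms b1 by (simp add: \<theta>_def)
  define L' where "L' = max L 1"
  define c where "c = min (\<theta> powr (1/r)) (L' powr (-q))"
  have c0: "c > 0" using th0 by (simp add: c_def L'_def)
  have cr: "c powr r \<le> \<theta>"
  proof -
    have "c powr r \<le> (\<theta> powr (1/r)) powr r" using c0 r0 by (intro powr_mono2) (auto simp: c_def)
    also have "\<dots> = \<theta>" using r0 th0 by (simp add: powr_powr)
    finally show ?thesis .
  qed
  obtain D where D: "disjoint_family D" and DD: "\<And>n. D n \<in> sets M \<and> D n \<subseteq> F \<and> 0 < measure M (D n)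
            \<and> measure M (D n) \<le> c * (1/2)^n"
    using disjoint_seq[OF assms(1-4) c0] by blast
  define m where "m n = measure M (D n)" for n
  have m0: "0 < m n" for n using DD by (simp add: m_def)
  have mc: "m n \<le> c" for n
  proof -
    have "m n \<le> c * (1/2)^n" using DD by (simp add: m_def)
    also have "\<dots> \<le> c * 1" using c0 by (intro mult_left_mono) (auto simp: power_le_one)
    finally show ?thesis by simp
  qed
  define a where "a n = m n powr (-1/q)" for n
  have a0: "0 < a n" for n using m0[of n] by (simp add: a_def)
  have aL: "L \<le> a n" for n
  proof -
    have "(L' powr (-q)) powr (-1/q) \<le> m n powr (-1/q)"
      using m0[of n] mc[of n] q0 by (intro powr_mono2') (auto simp: c_def)
    moreover have "(L' powr (-q)) powr (-1/q) = L'" using q0 by (simp add: powr_powr L'_def)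
    ultimately show ?thesis by (simp add: a_def L'_def)
  qed
  have em: "emeasure M (D n) = ennreal (m n)" for n by (simp add: m_def emeasure_eq_measure)
  define Z where "Z \<omega> = (\<Sum>n. a n * indicator (D n) \<omega>)" for \<omega>
  have Zm[measurable]: "Z \<in> borel_measurable M" unfolding Z_def using Z_meas[OF D] DD by blast
  have Zcases: "(\<exists>k. \<omega> \<in> D k \<and> Z \<omega> = a k) \<or> Z \<omega> = 0" for \<omega>
  proof (cases "\<omega> \<in> \<Union>(range D)")
    case True then obtain k where "\<omega> \<in> D k" by auto
    then show ?thesis using Zval_in[OF D] by (auto simp: Z_def)
  next
    case False then show ?thesis using Zval_out by (auto simp: Z_def)
  qed
  have Znn: "0 \<le> Z \<omega>" for \<omega> using Zcases[of \<omega>] a0 by (metis less_eq_real_def)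
  have ZF: "Z \<omega> \<noteq> 0 \<longrightarrow> \<omega> \<in> F \<and> L \<le> Z \<omega>" for \<omega> using Zcases[of \<omega>] aL DD by (metis subsetD)
  have NP: "(\<integral>\<^sup>+\<omega>. ennreal (Z \<omega> powr p) \<partial>M) = (\<Sum>n. ennreal (m n powr r))"
  proof -
    have "(\<integral>\<^sup>+\<omega>. ennreal (Z \<omega> powr p) \<partial>M) = (\<Sum>n. ennreal (a n powr p) * emeasure M (D n))"
      unfolding Z_def by (rule Z_nn[OF D]) (use DD in auto)
    also have "\<dots> = (\<Sum>n. ennreal (m n powr r))"
    proof (rule suminf_cong)
      fix n
      have "a n powr p * m n = m n powr (-(p/q)) * m n powr 1"
        using m0[of n] q0 by (simp add: a_def powr_powr)
      also have "\<dots> = m n powr (-(p/q) + 1)" by (rule powr_add[symmetric])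
      also have "\<dots> = m n powr r" by (simp add: r_def)
      finally have "a n powr p * m n = m n powr r" .
      then show "ennreal (a n powr p) * emeasure M (D n) = ennreal (m n powr r)"
        unfolding em using m0[of n] by (simp add: ennreal_mult[symmetric])
    qed
    finally show ?thesis .
  qed
  have "(\<Sum>n. ennreal (m n powr r)) \<le> (\<Sum>n. ennreal (c powr r * \<beta> ^ n))"
  proof (rule suminf_le)
    fix n
    have "m n powr r \<le> (c * (1/2)^n) powr r" using DD m0[of n] r0 by (intro powr_mono2) (auto simp: m_def)
    also have "\<dots> = c powr r * \<beta> ^ n"
      using c0 by (simp add: powr_mult \<beta>_def powr_power[symmetric] powr_realpow[symmetric] powr_powr mult.commute)
    finally show "ennreal (m n powr r) \<le> ennreal (c powr r * \<beta> ^ n)" by (intro ennreal_leI)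
  qed (auto intro: summableI)
  also have "(\<Sum>n. ennreal (c powr r * \<beta> ^ n)) = ennreal (c powr r * (1 / (1 - \<beta>)))"
    by (rule suminf_ennreal_eq) (use b0 b1 sums_mult[OF geometric_sums[of \<beta>], of "c powr r"] in \<open>auto\<close>)
  also have "c powr r * (1 / (1 - \<beta>)) \<le> \<eta> / 2"
  proof -
    have "c powr r * (1 / (1 - \<beta>)) \<le> \<theta> * (1 / (1 - \<beta>))" using cr b1 by (intro mult_right_mono) auto
    also have "\<dots> = \<eta> / 2" using b1 by (simp add: \<theta>_def field_simps)
    finally show ?thesis .
  qed
  finally have NP2: "(\<integral>\<^sup>+\<omega>. ennreal (Z \<omega> powr p) \<partial>M) \<le> ennreal (\<eta> / 2)" using NP
    by (metis ennreal_leI order_trans)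
  have intp: "integrable M (\<lambda>\<omega>. Z \<omega> powr p)"
    by (rule integrableI_nonneg) (use NP2 in \<open>auto simp: top_unique le_less_trans\<close>)
  have "ennreal (\<integral>\<omega>. Z \<omega> powr p \<partial>M) \<le> ennreal (\<eta> / 2)"
    using NP2 nn_integral_eq_integral[OF intp] by simp
  hence Ip: "(\<integral>\<omega>. Z \<omega> powr p \<partial>M) < \<eta>" using assms(7) by simp
  have "(\<integral>\<^sup>+\<omega>. ennreal ((Z \<omega> / 2) powr q) \<partial>M) = (\<Sum>n. ennreal ((a n / 2) powr q) * emeasure M (D n))"
    unfolding Z_def by (rule Z_nn[OF D, where h="\<lambda>x. (x/2) powr q"]) (use DD in auto)
  also have "\<dots> = (\<Sum>n. ennreal (1 / 2 powr q))"
  proof (rule suminf_cong)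
    fix n
    have aq: "a n powr q = m n powr (-1)" using q0 by (simp add: a_def powr_powr)
    have "(a n / 2) powr q * m n = a n powr q / 2 powr q * m n" by (simp add: powr_divide)
    also have "\<dots> = 1 / 2 powr q" unfolding aq using m0[of n] by (simp add: powr_minus_divide)
    finally have "(a n / 2) powr q * m n = 1 / 2 powr q" .
    then show "ennreal ((a n / 2) powr q) * emeasure M (D n) = ennreal (1 / 2 powr q)"
      unfolding em using m0[of n] by (simp add: ennreal_mult[symmetric])
  qed
  also have "\<dots> = top" by (rule const_suminf_top) simp
  finally have Iq: "(\<integral>\<^sup>+\<omega>. ennreal ((Z \<omega> / 2) powr q) \<partial>M) = top" .
  show ?thesis using Zm Znn ZF intp Ip Iq by blast
qed




lemma neg_u_q: "- u_q q x = (max 0 (-x)) powr q"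
  unfolding u_q_def by auto

lemma fatou_part:
  assumes "prob_space M" "0 < p" "0 < q"
    and Xs: "\<And>n. Xs n \<in> A_u M q \<alpha>" and Y: "memLp M p Y"
    and lim: "(\<lambda>n. Lp_norm M p (\<lambda>\<omega>. Xs n \<omega> - Y \<omega>)) \<longlonglongrightarrow> 0"
  shows "(\<integral>\<^sup>+\<omega>. ennreal (- u_q q (Y \<omega>)) \<partial>M) \<le> ennreal (-\<alpha>)"
proof -
  interpret prob_space M by fact
  have [measurable]: "Y \<in> borel_measurable M" and iY: "integrable M (\<lambda>\<omega>. \<bar>Y \<omega>\<bar> powr p)"
    using Y by (auto simp: memLp_def)
  have XL: "Xs n \<in> Linf M" for n using Xs by (auto simp: A_u_def)
  have Xm[measurable]: "Xs n \<in> borel_measurable M" for n using XL by (auto simp: Linf_def)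
  have intX: "integrable M (\<lambda>\<omega>. \<bar>Xs n \<omega>\<bar> powr p)" for n
  proof -
    obtain C where C: "AE \<omega> in M. \<bar>Xs n \<omega>\<bar> \<le> C" using XL[of n] by (auto simp: Linf_def)
    show ?thesis
    proof (rule integrable_const_bound[where B="\<bar>C\<bar> powr p"])
      show "AE x in M. norm (\<bar>Xs n x\<bar> powr p) \<le> \<bar>C\<bar> powr p"
        using C by eventually_elim (use assms(2) in \<open>auto intro!: powr_mono2\<close>)
    qed measurable
  qed
  have intd: "integrable M (\<lambda>\<omega>. \<bar>Xs n \<omega> - Y \<omega>\<bar> powr p)" for n
  proof (rule Bochner_Integration.integrable_bound)
    show "integrable M (\<lambda>\<omega>. 2 powr p * (\<bar>Xs n \<omega>\<bar> powr p + \<bar>Y \<omega>\<bar> powr p))"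
      using intX[of n] iY by auto
    show "AE x in M. norm (\<bar>Xs n x - Y x\<bar> powr p) \<le> norm (2 powr p * (\<bar>Xs n x\<bar> powr p + \<bar>Y x\<bar> powr p))"
      using abs_diff_powr_le[OF assms(2)] by (intro AE_I2) auto
  qed measurable
  define I where "I n = (\<integral>\<omega>. \<bar>Xs n \<omega> - Y \<omega>\<bar> powr p \<partial>M)" for n
  have I0: "0 \<le> I n" for n unfolding I_def by (intro integral_nonneg_AE) auto
  have "(\<lambda>n. (I n powr (1/p)) powr p) \<longlonglongrightarrow> 0"
    by (rule tendsto_zero_powrI[where b=p]) (use lim assms(2) in \<open>auto simp: Lp_norm_def I_def\<close>)
  moreover have "(I n powr (1/p)) powr p = I n" for n using I0[of n] assms(2) by (simp add: powr_powr)
  ultimately have Ilim: "I \<longlonglongrightarrow> 0" by simp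
  obtain s :: "nat \<Rightarrow> nat" where s: "strict_mono s"
    and AEs: "AE \<omega> in M. (\<lambda>n. \<bar>Xs (s n) \<omega> - Y \<omega>\<bar> powr p) \<longlonglongrightarrow> 0"
  proof -
    have "\<exists>r::nat\<Rightarrow>nat. strict_mono r \<and> (AE x in M. (\<lambda>n. \<bar>Xs (r n) x - Y x\<bar> powr p) \<longlonglongrightarrow> 0)"
      by (rule tendsto_L1_AE_subseq) (use intd Ilim[unfolded I_def] in auto)
    then show ?thesis using that by blast
  qed
  have AEc: "AE \<omega> in M. (\<lambda>n. ennreal (- u_q q (Xs (s n) \<omega>))) \<longlonglongrightarrow> ennreal (- u_q q (Y \<omega>))"
    using AEs
  proof eventually_elim
    fix \<omega> assume h: "(\<lambda>n. \<bar>Xs (s n) \<omega> - Y \<omega>\<bar> powr p) \<longlonglongrightarrow> 0"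
    have "(\<lambda>n. (\<bar>Xs (s n) \<omega> - Y \<omega>\<bar> powr p) powr (1/p)) \<longlonglongrightarrow> 0"
      by (rule tendsto_zero_powrI[where b="1/p"]) (use h assms(2) in auto)
    moreover have "(\<bar>Xs (s n) \<omega> - Y \<omega>\<bar> powr p) powr (1/p) = \<bar>Xs (s n) \<omega> - Y \<omega>\<bar>" for n
      using assms(2) by (simp add: powr_powr)
    ultimately have "(\<lambda>n. \<bar>Xs (s n) \<omega> - Y \<omega>\<bar>) \<longlonglongrightarrow> 0" by simp
    then have "(\<lambda>n. Xs (s n) \<omega> - Y \<omega>) \<longlonglongrightarrow> 0" by (simp add: tendsto_rabs_zero_iff)
    then have c: "(\<lambda>n. Xs (s n) \<omega>) \<longlonglongrightarrow> Y \<omega>" by (rule LIM_zero_cancel)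
    have "(\<lambda>n. (max 0 (- Xs (s n) \<omega>)) powr q) \<longlonglongrightarrow> (max 0 (- Y \<omega>)) powr q"
      by (rule tendsto_powr2) (use assms(3) c in \<open>auto intro!: tendsto_intros\<close>)
    then show "(\<lambda>n. ennreal (- u_q q (Xs (s n) \<omega>))) \<longlonglongrightarrow> ennreal (- u_q q (Y \<omega>))"
      unfolding neg_u_q by (rule tendsto_ennrealI)
  qed
  have "(\<integral>\<^sup>+\<omega>. ennreal (- u_q q (Y \<omega>)) \<partial>M) = (\<integral>\<^sup>+\<omega>. liminf (\<lambda>n. ennreal (- u_q q (Xs (s n) \<omega>))) \<partial>M)"
    by (rule nn_integral_cong_AE) (use AEc in \<open>auto simp: lim_imp_Liminf\<close>)
  also have "\<dots> \<le> liminf (\<lambda>n. \<integral>\<^sup>+\<omega>. ennreal (- u_q q (Xs (s n) \<omega>)) \<partial>M)"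
    by (rule nn_integral_liminf) measurable
  also have "\<dots> \<le> ennreal (-\<alpha>)"
  proof (rule Liminf_le)
    show "\<forall>\<^sub>F n in sequentially. (\<integral>\<^sup>+\<omega>. ennreal (- u_q q (Xs (s n) \<omega>)) \<partial>M) \<le> ennreal (-\<alpha>)"
    proof (intro always_eventually allI)
      fix n
      have iu: "integrable M (\<lambda>\<omega>. u_q q (Xs (s n) \<omega>))" using Linf_A[OF assms(1) XL] assms(3) by auto
      have "(\<integral>\<^sup>+\<omega>. ennreal (- u_q q (Xs (s n) \<omega>)) \<partial>M) = ennreal (\<integral>\<omega>. - u_q q (Xs (s n) \<omega>) \<partial>M)"
        by (rule nn_integral_eq_integral) (use iu u_q_le0 in auto)
      also have "\<dots> \<le> ennreal (-\<alpha>)" using Xs[of "s n"] by (intro ennreal_leI) (auto simp: A_u_def)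
      finally show "(\<integral>\<^sup>+\<omega>. ennreal (- u_q q (Xs (s n) \<omega>)) \<partial>M) \<le> ennreal (-\<alpha>)" .
    qed
  qed simp
  finally show ?thesis .
qed




lemma part2:
  assumes "prob_space M" "nonatomic M" "0 < p" "p < q"
  shows "\<not> Lp_interior_nonempty M p (Lp_closure M p (A_u M q \<alpha>))"
proof
  interpret prob_space M by fact
  assume "Lp_interior_nonempty M p (Lp_closure M p (A_u M q \<alpha>))"
  then obtain X \<epsilon> where X: "memLp M p X" and e0: "\<epsilon> > 0"
    and H: "\<And>Y. memLp M p Y \<Longrightarrow> Lp_norm M p (\<lambda>\<omega>. Y \<omega> - X \<omega>) < \<epsilon> \<Longrightarrow> Y \<in> Lp_closure M p (A_u M q \<alpha>)"
    unfolding Lp_interior_nonempty_def by blast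
  have [measurable]: "X \<in> borel_measurable M" and iX: "integrable M (\<lambda>\<omega>. \<bar>X \<omega>\<bar> powr p)"
    using X by (auto simp: memLp_def)
  have q0: "q > 0" using assms by auto
  define G where "G n = {\<omega>\<in>space M. X \<omega> \<le> real n}" for n :: nat
  have Gs: "G n \<in> sets M" for n unfolding G_def by measurable
  obtain N where N: "measure M (G N) > 0"
  proof (rule ccontr)
    assume "\<not> thesis"
    then have "\<forall>n. measure M (G n) \<le> 0" using that by (meson not_le)
    then have "\<forall>n. G n \<in> null_sets M" using Gs by (auto simp: null_sets_def emeasure_eq_measure
      intro: antisym measure_nonneg)
    then have "(\<Union>n. G n) \<in> null_sets M" by (intro null_sets_UN) auto
    moreover have "(\<Union>n. G n) = space M"
      unfolding G_def by (auto simp: real_arch_simple)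
    ultimately show False using prob_space by (auto simp: null_sets_def emeasure_eq_measure)
  qed
  obtain Z where Zm[measurable]: "Z \<in> borel_measurable M" and Znn: "\<And>\<omega>. 0 \<le> Z \<omega>"
    and ZF: "\<And>\<omega>. Z \<omega> \<noteq> 0 \<Longrightarrow> \<omega> \<in> G N \<and> 2 * real N \<le> Z \<omega>"
    and iZ: "integrable M (\<lambda>\<omega>. Z \<omega> powr p)" and IZ: "(\<integral>\<omega>. Z \<omega> powr p \<partial>M) < \<epsilon> powr p"
    and NZ: "(\<integral>\<^sup>+\<omega>. ennreal ((Z \<omega> / 2) powr q) \<partial>M) = top"
    using Z_exists[OF assms(1,2) Gs N assms(3,4), of "\<epsilon> powr p" "2 * real N"] e0 by auto
  define Y where "Y \<omega> = X \<omega> - Z \<omega>" for \<omega>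
  have [measurable]: "Y \<in> borel_measurable M" unfolding Y_def by measurable
  have mY: "memLp M p Y"
    unfolding memLp_def
  proof (intro conjI)
    show "integrable M (\<lambda>\<omega>. \<bar>Y \<omega>\<bar> powr p)"
    proof (rule Bochner_Integration.integrable_bound)
      show "integrable M (\<lambda>\<omega>. 2 powr p * (\<bar>X \<omega>\<bar> powr p + Z \<omega> powr p))"
        using iX iZ by auto
      show "AE x in M. norm (\<bar>Y x\<bar> powr p) \<le> norm (2 powr p * (\<bar>X x\<bar> powr p + Z x powr p))"
      proof (intro AE_I2)
        fix x
        have "\<bar>Y x\<bar> powr p \<le> 2 powr p * (\<bar>X x\<bar> powr p + \<bar>Z x\<bar> powr p)"
          unfolding Y_def by (rule abs_diff_powr_le[OF assms(3)])
        then show "norm (\<bar>Y x\<bar> powr p) \<le> norm (2 powr p * (\<bar>X x\<bar> powr p + Z x powr p))"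
          using Znn[of x] by simp
      qed
    qed measurable
  qed measurable
  have "Lp_norm M p (\<lambda>\<omega>. Y \<omega> - X \<omega>) = (\<integral>\<omega>. Z \<omega> powr p \<partial>M) powr (1/p)"
    unfolding Lp_norm_def Y_def using Znn by simp
  also have "\<dots> < (\<epsilon> powr p) powr (1/p)"
    using IZ assms(3) by (intro powr_less_mono2) (auto intro!: integral_nonneg_AE)
  also have "\<dots> = \<epsilon>" using e0 assms(3) by (simp add: powr_powr)
  finally have "Y \<in> Lp_closure M p (A_u M q \<alpha>)" using H mY by blast
  then obtain Xs where Xs: "\<And>n. Xs n \<in> A_u M q \<alpha>"
    and lim: "(\<lambda>n. Lp_norm M p (\<lambda>\<omega>. Xs n \<omega> - Y \<omega>)) \<longlonglongrightarrow> 0"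
    unfolding Lp_closure_def by blast
  have up: "(\<integral>\<^sup>+\<omega>. ennreal (- u_q q (Y \<omega>)) \<partial>M) \<le> ennreal (-\<alpha>)"
    by (rule fatou_part[OF assms(1,3) q0 Xs mY lim])
  have "(\<integral>\<^sup>+\<omega>. ennreal ((Z \<omega> / 2) powr q) \<partial>M) \<le> (\<integral>\<^sup>+\<omega>. ennreal (- u_q q (Y \<omega>)) \<partial>M)"
  proof (rule nn_integral_mono)
    fix \<omega> assume "\<omega> \<in> space M"
    show "ennreal ((Z \<omega> / 2) powr q) \<le> ennreal (- u_q q (Y \<omega>))"
    proof (cases "Z \<omega> = 0")
      case True then show ?thesis by simp
    next
      case False
      then have "\<omega> \<in> G N" "2 * real N \<le> Z \<omega>" using ZF by auto
      then have x: "X \<omega> \<le> real N" by (auto simp: G_def)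
      have zp: "Z \<omega> > 0" using False Znn[of \<omega>] by auto
      have yl: "Y \<omega> \<le> - (Z \<omega> / 2)" using x \<open>2 * real N \<le> Z \<omega>\<close> by (simp add: Y_def)
      then have "- u_q q (Y \<omega>) = \<bar>Y \<omega>\<bar> powr q" using zp by (simp add: u_q_def)
      moreover have "(Z \<omega> / 2) powr q \<le> \<bar>Y \<omega>\<bar> powr q" using yl zp q0 by (intro powr_mono2) auto
      ultimately show ?thesis by (intro ennreal_leI) simp
    qed
  qed
  with NZ up show False by (simp add: top_unique)
qed

theorem corollary6p8:
  fixes M :: "'a measure" and q \<alpha> S0 :: real and ST :: "'a \<Rightarrow> real"
  assumes "prob_space M" and "nonatomic M"
    and "1 \<le> q" and "\<alpha> < 0"
    and "traded_asset M S0 ST" and "ST \<in> Linf M"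
    and "rho_finite M (A_u M q \<alpha>) S0 ST"
  shows "index_fin M (A_u M q \<alpha>) = ereal q \<and> q \<in> index_set M (A_u M q \<alpha>)"
proof -
  have qin: "q \<in> index_set M (A_u M q \<alpha>)" by (rule part1[OF assms(1,3,4)])
  have low: "q \<le> p" if "p \<in> index_set M (A_u M q \<alpha>)" for p
  proof (rule ccontr)
    assume "\<not> q \<le> p"
    moreover have "1 \<le> p" "Lp_interior_nonempty M p (Lp_closure M p (A_u M q \<alpha>))"
      using that by (auto simp: index_set_def)
    ultimately show False using part2[OF assms(1,2), of p q \<alpha>] by auto
  qed
  have "index_fin M (A_u M q \<alpha>) = ereal q"
    unfolding index_fin_def
  proof (rule antisym)
    show "Inf (ereal ` index_set M (A_u M q \<alpha>)) \<le> ereal q" using qin by (intro Inf_lower) auto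
    show "ereal q \<le> Inf (ereal ` index_set M (A_u M q \<alpha>))" using low by (intro Inf_greatest) auto
  qed
  with qin show ?thesis by simp
qed


end
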